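(* Consider the discrete all-pay auction with $n\ge2$ bidders whose values are drawn independently and uniformly from $X=\{0,1,\dots,x\}$, where $x\ge10$. Then, for every $n\ge2$ and under either tie rule (model with ties or model without ties), the auction has no symmetric equilibrium.
   Context: Model. There are $n$ risk-neutral bidders competing for one indivisible object. Values and bids lie in $X=\{0,1,2,\dots,x\}$. Each bidder privately learns a value drawn independently and uniformly from $X$. Each bidder submits a bid in $X$. A (pure) strategy is a bidding function $\beta:X\to X$. Tie rules: in the model without ties, bidder $i$ wins iff $b_i>b_j$ for all $j\neq i$ (if the highest bid is tied, nobody wins); in the model with ties, if $m$ bidders submit the highest bid, each of them wins with probability $1/m$. In the all-pay auction, a bidder with value $v_i$ bidding $b_i$ gets expected payoff $v_i\Pr(i\text{ wins})-b_i$ (everyone pays their bid). An equilibrium is a profile of bidding functions such that each bidder's bidding function maximises their expected payoff given the others' bidding functions (a pure-strategy Bayes–Nash equilibrium) and such that no bidder uses a weakly dominated bidding function (a bidding function is weakly dominated if some other bidding function yields at least as high expected payoff against every profile of opponents' bidding functions, and strictly higher against some). A symmetric equilibrium is an equilibrium in which all bidders use the same bidding function. *)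

theory Defs
  imports Complex_Main "HOL-Library.FuncSet"
begin

(* Bidders are 0..<n; values and bids lie in {0..x}.  A bidding function is
   beta :: nat => nat, required to map {0..x} into {0..x} (its values outside
   {0..x} are irrelevant).  The Boolean 'ties' selects the tie rule:
   ties = True : the m highest bidders each win with probability 1/m;
   ties = False: a tied highest bid means nobody wins. *)

definition valid_strategy :: "nat \<Rightarrow> (nat \<Rightarrow> nat) \<Rightarrow> bool" where
  "valid_strategy x beta \<longleftrightarrow> (\<forall>v\<le>x. beta v \<le> x)"

definition opponents :: "nat \<Rightarrow> nat \<Rightarrow> nat set" where
  "opponents n i = {0..<n} - {i}"

definition win_share :: "bool \<Rightarrow> nat \<Rightarrow> nat \<Rightarrow> nat \<Rightarrow> (nat \<Rightarrow> nat) \<Rightarrow> real" where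
  "win_share ties n i b bids =
     (if \<forall>j\<in>opponents n i. bids j < b then 1
      else if ties \<and> (\<forall>j\<in>opponents n i. bids j \<le> b)
        then 1 / real (1 + card {j\<in>opponents n i. bids j = b})
      else 0)"

definition win_prob :: "bool \<Rightarrow> nat \<Rightarrow> nat \<Rightarrow> (nat \<Rightarrow> nat \<Rightarrow> nat) \<Rightarrow> nat \<Rightarrow> nat \<Rightarrow> real" where
  "win_prob ties n x s i b =
     (\<Sum>w\<in>PiE (opponents n i) (\<lambda>_. {0..x}). win_share ties n i b (\<lambda>j. s j (w j)))
       / real (x + 1) ^ (n - 1)"

definition interim_payoff :: "bool \<Rightarrow> nat \<Rightarrow> nat \<Rightarrow> (nat \<Rightarrow> nat \<Rightarrow> nat) \<Rightarrow> nat \<Rightarrow> nat \<Rightarrow> nat \<Rightarrow> real" where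
  "interim_payoff ties n x s i v b = real v * win_prob ties n x s i b - real b"

definition exp_payoff :: "bool \<Rightarrow> nat \<Rightarrow> nat \<Rightarrow> (nat \<Rightarrow> nat \<Rightarrow> nat) \<Rightarrow> nat \<Rightarrow> (nat \<Rightarrow> nat) \<Rightarrow> real" where
  "exp_payoff ties n x s i beta =
     (\<Sum>v\<in>{0..x}. interim_payoff ties n x s i v (beta v)) / real (x + 1)"

definition valid_profile :: "nat \<Rightarrow> nat \<Rightarrow> (nat \<Rightarrow> nat \<Rightarrow> nat) \<Rightarrow> bool" where
  "valid_profile n x s \<longleftrightarrow> (\<forall>j<n. valid_strategy x (s j))"

definition weakly_dominated :: "bool \<Rightarrow> nat \<Rightarrow> nat \<Rightarrow> nat \<Rightarrow> (nat \<Rightarrow> nat) \<Rightarrow> bool" where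
  "weakly_dominated ties n x i beta \<longleftrightarrow>
     (\<exists>beta'. valid_strategy x beta' \<and>
        (\<forall>s. valid_profile n x s \<longrightarrow> exp_payoff ties n x s i beta' \<ge> exp_payoff ties n x s i beta) \<and>
        (\<exists>s. valid_profile n x s \<and> exp_payoff ties n x s i beta' > exp_payoff ties n x s i beta))"

definition equilibrium :: "bool \<Rightarrow> nat \<Rightarrow> nat \<Rightarrow> (nat \<Rightarrow> nat \<Rightarrow> nat) \<Rightarrow> bool" where
  "equilibrium ties n x s \<longleftrightarrow>
     valid_profile n x s \<and>
     (\<forall>i<n. \<forall>beta'. valid_strategy x beta' \<longrightarrow> exp_payoff ties n x s i beta' \<le> exp_payoff ties n x s i (s i)) \<and>
     (\<forall>i<n. \<not> weakly_dominated ties n x i (s i))"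

definition symmetric_equilibrium :: "bool \<Rightarrow> nat \<Rightarrow> nat \<Rightarrow> (nat \<Rightarrow> nat) \<Rightarrow> bool" where
  "symmetric_equilibrium ties n x beta \<longleftrightarrow> equilibrium ties n x (\<lambda>_. beta)"

end

theory Submission
  imports Defs
begin

lemma sum_PiE_insert:
  assumes "j \<notin> I"
  shows "(\<Sum>w\<in>PiE (insert j I) A. f w) = (\<Sum>a\<in>A j. \<Sum>w\<in>PiE I A. f (w(j:=a)))"
proof -
  have "(\<Sum>w\<in>PiE (insert j I) A. f w) = (\<Sum>z\<in>A j \<times> PiE I A. f ((\<lambda>(y,g). g(j:=y)) z))"
    unfolding PiE_insert_eq by (subst sum.reindex[OF inj_combinator[OF assms]]) (simp add: o_def)
  also have "\<dots> = (\<Sum>a\<in>A j. \<Sum>w\<in>PiE I A. f (w(j:=a)))"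
    by (simp add: sum.cartesian_product split_def)
  finally show ?thesis .
qed

lemma sh_nonneg: "0 \<le> win_share t n i b bids"
  unfolding win_share_def by auto
lemma sh_le1: "win_share t n i b bids \<le> 1"
  unfolding win_share_def by auto

lemma sh_mono: assumes "b \<le> b'" shows "win_share t n i b bids \<le> win_share t n i b' bids"
proof (cases "b = b'")
  case False
  hence lt: "b < b'" using assms by simp
  show ?thesis
  proof (cases "\<forall>j\<in>opponents n i. bids j \<le> b")
    case True
    hence "\<forall>j\<in>opponents n i. bids j < b'" using lt by auto
    thus ?thesis using sh_le1[of t n i b bids] unfolding win_share_def by simp
  next
    case False
    hence "\<not> (\<forall>j\<in>opponents n i. bids j < b)" by force
    hence "win_share t n i b bids = 0" using False unfolding win_share_def by auto
    thus ?thesis using sh_nonneg[of t n i b' bids] by simp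
  qed
qed simp

lemma helpG:
  fixes x p c M N :: real
  assumes x0: "x \<ge> 0" and t: "x*(1-p) \<le> 1" and u: "p \<le> 1 - c*(1 - (M/N)^k)" and N: "N > 0"
  shows "x*c*(N^k - M^k) \<le> N^k"
proof -
  have "x*(c*(1 - (M/N)^k)) \<le> x*(1-p)" using u x0 by (intro mult_left_mono) auto
  hence h: "x*(c*(1 - (M/N)^k)) \<le> 1" using t by simp
  have Nk: "N^k > 0" using N by simp
  have "1 - (M/N)^k = (N^k - M^k)/N^k" using Nk N by (simp add: power_divide diff_divide_distrib)
  hence "x*c*(N^k - M^k)/N^k \<le> 1" using h by (simp add: mult.assoc)
  thus ?thesis using Nk by (simp add: divide_le_eq)
qed

lemma poly4: "(x::real) \<ge> 10 \<Longrightarrow> 2*(x+1)^3 < x*((x+1)^3 - x^3)"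
proof -
  assume "x \<ge> 10"
  then obtain y where y: "x = 10 + y" "y \<ge> 0" by (intro that[of "x - 10"]) auto
  show ?thesis unfolding y(1) using y(2)
    by (simp add: power2_eq_square power3_eq_cube algebra_simps add_pos_nonneg add_nonneg_pos mult_nonneg_nonneg)
qed

lemma poly3: "(x::real) \<ge> 10 \<Longrightarrow> (x+1)^2 < x*((x+1)^2 - x^2)"
proof -
  assume "x \<ge> 10"
  then obtain y where y: "x = 10 + y" "y \<ge> 0" by (intro that[of "x - 10"]) auto
  show ?thesis unfolding y(1) using y(2)
    by (simp add: power2_eq_square algebra_simps add_pos_nonneg add_nonneg_pos mult_nonneg_nonneg)
qed

lemma poly3t: "(x::real) \<ge> 10 \<Longrightarrow> 2*(x+1)^2 < x*((x+1)^2 - (x+1-2)^2)"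
proof -
  assume "x \<ge> 10"
  then obtain y where y: "x = 10 + y" "y \<ge> 0" by (intro that[of "x - 10"]) auto
  show ?thesis unfolding y(1) using y(2)
    by (simp add: power2_eq_square algebra_simps add_pos_nonneg add_nonneg_pos mult_nonneg_nonneg)
qed

context
  fixes ties :: bool and n x :: nat and \<beta> :: "nat \<Rightarrow> nat"
  assumes eq: "symmetric_equilibrium ties n x \<beta>" and n2: "n \<ge> 2"
begin

abbreviation p where "p b \<equiv> win_prob ties n x (\<lambda>_. \<beta>) 0 b"

lemma valid_beta: "v \<le> x \<Longrightarrow> \<beta> v \<le> x"
proof -
  have "\<forall>j<n. valid_strategy x \<beta>"
    using eq unfolding symmetric_equilibrium_def equilibrium_def valid_profile_def by simp
  moreover have "0 < n" using n2 by simp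
  ultimately have "valid_strategy x \<beta>" by blast
  thus "v \<le> x \<Longrightarrow> \<beta> v \<le> x" unfolding valid_strategy_def by auto
qed

lemma opt:
  assumes v: "v \<le> x" and b: "b \<le> x"
  shows "real v * p b - real b \<le> real v * p (\<beta> v) - real (\<beta> v)"
proof -
  let ?ip = "interim_payoff ties n x (\<lambda>_. \<beta>) 0"
  have vs: "valid_strategy x (\<beta>(v:=b))" using valid_beta b unfolding valid_strategy_def by auto
  have "exp_payoff ties n x (\<lambda>_. \<beta>) 0 (\<beta>(v:=b)) \<le> exp_payoff ties n x (\<lambda>_. \<beta>) 0 \<beta>"
    using eq n2 vs unfolding symmetric_equilibrium_def equilibrium_def by auto
  hence le: "(\<Sum>u\<in>{0..x}. ?ip u ((\<beta>(v:=b)) u)) \<le> (\<Sum>u\<in>{0..x}. ?ip u (\<beta> u))"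
    unfolding exp_payoff_def by (simp add: divide_right_mono_neg divide_le_cancel)
  have vin: "v \<in> {0..x}" using v by auto
  have e1: "(\<Sum>u\<in>{0..x}. ?ip u ((\<beta>(v:=b)) u)) = ?ip v b + (\<Sum>u\<in>{0..x}-{v}. ?ip u (\<beta> u))"
    by (subst sum.remove[OF _ vin]) (auto intro!: sum.cong)
  have e2: "(\<Sum>u\<in>{0..x}. ?ip u (\<beta> u)) = ?ip v (\<beta> v) + (\<Sum>u\<in>{0..x}-{v}. ?ip u (\<beta> u))"
    by (subst sum.remove[OF _ vin]) auto
  from le e1 e2 have "?ip v b \<le> ?ip v (\<beta> v)" by linarith
  thus ?thesis unfolding interim_payoff_def .
qed

abbreviation Opp where "Opp \<equiv> opponents n 0"
abbreviation PP where "PP \<equiv> PiE Opp (\<lambda>_. {0..x::nat})"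
abbreviation sh where "sh b w \<equiv> win_share ties n 0 b (\<lambda>j. \<beta> (w j))"

lemma O_eq: "Opp = {1..<n}" unfolding opponents_def by auto
lemma card_O: "card Opp = n - 1" unfolding O_eq by simp
lemma fin_PP: "finite PP" by (simp add: O_eq finite_PiE)
lemma card_PP: "card PP = (x+1)^(n-1)"
  by (simp add: card_PiE O_eq)

lemma p_def': "p b = (\<Sum>w\<in>PP. sh b w) / (real x + 1)^(n-1)"
  unfolding win_prob_def by (simp add: add.commute)

lemma p_mono: "b \<le> b' \<Longrightarrow> p b \<le> p b'"
  unfolding p_def' by (intro divide_right_mono sum_mono sh_mono) auto

lemma p_nonneg: "0 \<le> p b"
  unfolding p_def' by (intro divide_nonneg_nonneg sum_nonneg sh_nonneg) auto

lemma p_top: assumes "\<forall>v\<le>x. \<beta> v < b" shows "p b = 1"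
proof -
  have "\<And>w. w \<in> PP \<Longrightarrow> sh b w = 1"
    using assms unfolding win_share_def by (auto simp: PiE_iff)
  hence "(\<Sum>w\<in>PP. sh b w) = real (card PP)" by simp
  thus ?thesis unfolding p_def' card_PP by (simp add: add.commute)
qed

lemma sh_tie:
  assumes "j \<in> Opp" "\<beta> (w j) = b"
  shows "sh b w \<le> 1 - (if ties then 1/2 else 1)"
proof -
  have nl: "\<not> (\<forall>j\<in>Opp. \<beta> (w j) < b)" using assms by force
  show ?thesis
  proof (cases "ties \<and> (\<forall>j\<in>Opp. \<beta> (w j) \<le> b)")
    case True
    have fin: "finite {j\<in>Opp. \<beta> (w j) = b}" by (simp add: O_eq)
    have "j \<in> {j\<in>Opp. \<beta> (w j) = b}" using assms by simp
    hence "card {j\<in>Opp. \<beta> (w j) = b} \<ge> 1" using fin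
      by (metis One_nat_def Suc_leI card_gt_0_iff empty_iff)
    hence "1 / real (1 + card {j\<in>Opp. \<beta> (w j) = b}) \<le> 1/2"
      by (simp add: divide_simps)
    thus ?thesis using nl True unfolding win_share_def by simp
  next
    case False
    thus ?thesis using nl unfolding win_share_def by auto
  qed
qed

lemma card_Q:
  assumes J: "J \<subseteq> Opp" and S: "S \<subseteq> {0..x}"
  shows "card {w\<in>PP. \<forall>j\<in>J. w j \<notin> S} = (x+1-card S)^card J * (x+1)^(n-1-card J)"
proof -
  have eqs: "{w\<in>PP. \<forall>j\<in>J. w j \<notin> S} = PiE Opp (\<lambda>j. if j \<in> J then {0..x} - S else {0..x})"
    using J by (auto simp: PiE_def Pi_def extensional_def split: if_splits)
  have finO: "finite Opp" by (simp add: O_eq)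
  have finJ: "finite J" using J finO finite_subset by auto
  have cS: "card ({0..x} - S) = x + 1 - card S" using S by (simp add: card_Diff_subset finite_subset)
  have "card (PiE Opp (\<lambda>j. if j \<in> J then {0..x} - S else {0..x}))
      = (\<Prod>j\<in>Opp. card (if j \<in> J then {0..x} - S else {0..x}))"
    using finO by (simp add: card_PiE)
  also have "\<dots> = (\<Prod>j\<in>J. card ({0..x} - S)) * (\<Prod>j\<in>Opp - J. card {0..x})"
    using prod.subset_diff[OF J finO, of "\<lambda>j. card (if j \<in> J then {0..x} - S else {0..x})"]
    by (simp add: mult.commute)
  also have "\<dots> = (x+1-card S)^card J * (x+1)^(n-1-card J)"
    using cS finJ J by (simp add: card_Diff_subset card_O)
  finally show ?thesis using eqs by simp
qed

lemma UB:
  assumes J: "J \<subseteq> Opp" and S: "S \<subseteq> {0..x}" and Sb: "\<forall>v\<in>S. \<beta> v = b"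
  shows "(\<Sum>w\<in>PP. sh b w) \<le> real (card PP) - (if ties then 1/2 else 1) *
           (real (card PP) - real (card {w\<in>PP. \<forall>j\<in>J. w j \<notin> S}))"
proof -
  define Q where "Q = {w\<in>PP. \<forall>j\<in>J. w j \<notin> S}"
  define c :: real where "c = (if ties then 1/2 else 1)"
  have QP: "Q \<subseteq> PP" unfolding Q_def by auto
  have pt: "sh b w \<le> 1 - c * (if w \<in> Q then 0 else 1)" if w: "w \<in> PP" for w
  proof (cases "w \<in> Q")
    case True thus ?thesis using sh_le1 by simp
  next
    case False
    then obtain j where "j \<in> J" "w j \<in> S" using w unfolding Q_def by auto
    thus ?thesis using sh_tie[of j w b] J Sb False unfolding c_def by auto
  qed
  have "(\<Sum>w\<in>PP. sh b w) \<le> (\<Sum>w\<in>PP. 1 - c * (if w \<in> Q then 0 else 1))"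
    by (rule sum_mono) (rule pt)
  also have "\<dots> = real (card PP) - c * (\<Sum>w\<in>PP. (if w \<in> Q then 0 else 1))"
    by (simp add: sum_subtractf sum_distrib_left)
  also have "(\<Sum>w\<in>PP. (if w \<in> Q then 0 else 1::real)) = real (card (PP - Q))"
    using fin_PP by (simp add: sum.If_cases Diff_eq)
  also have "card (PP - Q) = card PP - card Q" using QP fin_PP by (simp add: card_Diff_subset finite_subset)
  also have "real (card PP - card Q) = real (card PP) - real (card Q)"
    using QP fin_PP by (simp add: card_mono)
  finally show ?thesis unfolding Q_def c_def .
qed

lemma UBp:
  assumes J: "J \<subseteq> Opp" and S: "S \<subseteq> {0..x}" and Sb: "\<forall>v\<in>S. \<beta> v = b"
  shows "p b \<le> 1 - (if ties then 1/2 else 1) *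
            (1 - ((real x + 1 - real (card S)) / (real x + 1))^card J)"
proof -
  define N where "N = real x + 1"
  define c :: real where "c = (if ties then 1/2 else 1)"
  define k where "k = card J"
  define m where "m = n - 1"
  have Npos: "N > 0" unfolding N_def by simp
  have km: "k \<le> m" unfolding k_def m_def using J card_O card_mono[of Opp J] by (simp add: O_eq)
  have sx: "card S \<le> x + 1" using card_mono[OF _ S] by simp
  have cPP: "real (card PP) = N^m" unfolding card_PP N_def m_def by (simp add: add.commute)
  have cQ: "real (card {w\<in>PP. \<forall>j\<in>J. w j \<notin> S}) = (N - real (card S))^k * N^(m-k)"
    unfolding card_Q[OF J S] N_def k_def m_def using sx by (simp add: of_nat_diff add.commute)
  have Nm: "N^m = N^k * N^(m-k)" using km by (simp add: power_add[symmetric])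
  have Nmpos: "N^m > 0" using Npos by simp
  have "p b = (\<Sum>w\<in>PP. sh b w) / N^m" unfolding p_def' N_def m_def ..
  also have "\<dots> \<le> (N^m - c * (N^m - (N - real (card S))^k * N^(m-k))) / N^m"
    using UB[OF J S Sb] cPP cQ Nmpos unfolding c_def by (intro divide_right_mono) auto
  also have "\<dots> = 1 - c * (1 - (N - real (card S))^k * N^(m-k) / N^m)"
    using Nmpos Npos by (simp add: diff_divide_distrib right_diff_distrib)
  also have "(N - real (card S))^k * N^(m-k) / N^m = ((N - real (card S))/N)^k"
    unfolding Nm using Npos by (simp add: power_divide)
  finally show ?thesis unfolding c_def N_def k_def .
qed

definition s1 :: "nat \<Rightarrow> nat \<Rightarrow> real" where
  "s1 c b = (if c < b then 1 else if c = b \<and> ties then 1/2 else 0)"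

lemma p2: assumes "n = 2" shows "p b = (\<Sum>a\<in>{0..x}. s1 (\<beta> a) b) / (real x + 1)"
proof -
  have "{1..<n} = insert 1 {}" using assms by auto
  hence O1: "Opp = insert 1 {}" using O_eq by simp
  have sh1: "sh b ((\<lambda>_. undefined)(1:=a)) = s1 (\<beta> a) b" for a
  proof -
    have "{j \<in> Opp. \<beta> (((\<lambda>_. undefined)(1:=a)) j) = b} = (if \<beta> a = b then {1} else {})"
      unfolding O1 by auto
    thus ?thesis unfolding win_share_def s1_def O1 by auto
  qed
  have "(\<Sum>w\<in>PP. sh b w) = (\<Sum>a\<in>{0..x}. \<Sum>w\<in>PiE {} (\<lambda>_. {0..x}). sh b (w(1:=a)))"
    unfolding O1 by (rule sum_PiE_insert) simp
  also have "\<dots> = (\<Sum>a\<in>{0..x}. s1 (\<beta> a) b)" using sh1 by simp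
  finally show ?thesis unfolding p_def' using assms by simp
qed

definition s2 :: "nat \<Rightarrow> nat \<Rightarrow> nat \<Rightarrow> real" where
  "s2 c1 c2 b = (if c1 < b \<and> c2 < b then 1 else if ties \<and> c1 \<le> b \<and> c2 \<le> b
     then 1 / (1 + (if c1 = b then 1 else 0) + (if c2 = b then 1 else 0)) else 0)"

lemma p3: assumes "n = 3"
  shows "p b = (\<Sum>a\<in>{0..x}. \<Sum>a'\<in>{0..x}. s2 (\<beta> a) (\<beta> a') b) / (real x + 1)^2"
proof -
  have "{1..<n} = insert 1 (insert 2 {})" using assms by auto
  hence O1: "Opp = insert 1 (insert 2 {})" using O_eq by simp
  have sh1: "sh b (((\<lambda>_. undefined)(2:=a'))(1:=a)) = s2 (\<beta> a) (\<beta> a') b" for a a'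
  proof -
    have "card {j \<in> Opp. \<beta> ((((\<lambda>_. undefined)(2:=a'))(1:=a)) j) = b}
         = (if \<beta> a = b then 1 else 0) + (if \<beta> a' = b then 1 else 0)"
    proof -
      have setEq: "{j \<in> Opp. \<beta> ((((\<lambda>_. undefined)(2:=a'))(1:=a)) j) = b}
         = (if \<beta> a = b then {1} else {}) \<union> (if \<beta> a' = b then {2} else {})"
        unfolding O1 by auto
      show ?thesis unfolding setEq by (cases "\<beta> a = b"; cases "\<beta> a' = b") simp_all
    qed
    thus ?thesis unfolding win_share_def s2_def O1 by (auto simp: add.assoc)
  qed
  have "(\<Sum>w\<in>PP. sh b w) = (\<Sum>a\<in>{0..x}. \<Sum>w\<in>PiE (insert 2 {}) (\<lambda>_. {0..x}). sh b (w(1:=a)))"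
    unfolding O1 by (rule sum_PiE_insert) simp
  also have "\<dots> = (\<Sum>a\<in>{0..x}. \<Sum>a'\<in>{0..x}. \<Sum>w\<in>PiE {} (\<lambda>_. {0..x}). sh b ((w(2:=a'))(1:=a)))"
    by (intro sum.cong refl sum_PiE_insert) simp
  also have "\<dots> = (\<Sum>a\<in>{0..x}. \<Sum>a'\<in>{0..x}. s2 (\<beta> a) (\<beta> a') b)" using sh1 by simp
  finally have e: "(\<Sum>w\<in>PP. sh b w) = (\<Sum>a\<in>{0..x}. \<Sum>a'\<in>{0..x}. s2 (\<beta> a) (\<beta> a') b)" .
  have "(real x + 1)^(n-1) = (real x + 1)^2" using assms by simp
  thus ?thesis using p_def'[of b] e by simp
qed
lemma beta_mono: assumes "v \<le> v'" "v' \<le> x" shows "\<beta> v \<le> \<beta> v'"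
proof (rule ccontr)
  assume "\<not> ?thesis"
  hence lt: "\<beta> v' < \<beta> v" by simp
  have o1: "real v * p (\<beta> v') - real (\<beta> v') \<le> real v * p (\<beta> v) - real (\<beta> v)"
    using opt[of v "\<beta> v'"] assms valid_beta by auto
  have o2: "real v' * p (\<beta> v) - real (\<beta> v) \<le> real v' * p (\<beta> v') - real (\<beta> v')"
    using opt[of v' "\<beta> v"] assms valid_beta by auto
  have pm: "p (\<beta> v') \<le> p (\<beta> v)" using p_mono lt by simp
  have ne: "v \<noteq> v'" using lt by auto
  hence vv: "real v < real v'" using assms by simp
  have "(real v' - real v) * (p (\<beta> v) - p (\<beta> v')) \<le> 0" using o1 o2 by (simp add: algebra_simps)
  hence "p (\<beta> v) - p (\<beta> v') \<le> 0" using vv by (simp add: mult_le_0_iff)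
  hence "p (\<beta> v) = p (\<beta> v')" using pm by simp
  with o1 lt show False by simp
qed

lemma top3:
  assumes n3: "n = 3" and ti: "ties" and x10: "x \<ge> 10" and CB: "\<beta> (x-1) < \<beta> x"
  shows False
proof -
  define B where "B = \<beta> x"
  define C where "C = \<beta> (x-1)"
  define N where "N = real x + 1"
  have Npos: "N > 0" unfolding N_def by simp
  have allC: "\<forall>a<x. \<beta> a \<le> C" unfolding C_def using beta_mono by auto
  have CB': "C < B" using CB B_def C_def by simp
  have Bx: "B \<le> x" using valid_beta B_def by simp
  have ins: "{0..x} = insert x {0..<x}" by auto
  have split: "(\<Sum>a\<in>{0..x}. \<Sum>a'\<in>{0..x}. g a a') =
     (\<Sum>a\<in>{0..<x}. \<Sum>a'\<in>{0..<x}. g a a') + (\<Sum>a\<in>{0..<x}. g a x) + (\<Sum>a'\<in>{0..<x}. g x a') + g x x"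
    for g :: "nat \<Rightarrow> nat \<Rightarrow> real"
    unfolding ins by (simp add: sum.distrib algebra_simps)
  have pf: "p b = ((\<Sum>a\<in>{0..<x}. \<Sum>a'\<in>{0..<x}. s2 (\<beta> a) (\<beta> a') b) + (\<Sum>a\<in>{0..<x}. s2 (\<beta> a) B b)
       + (\<Sum>a'\<in>{0..<x}. s2 B (\<beta> a') b) + s2 B B b) / N^2" for b
    using p3[OF n3, of b] split[of "\<lambda>a a'. s2 (\<beta> a) (\<beta> a') b"] unfolding N_def B_def by simp
  have lowlow: "(\<Sum>a\<in>{0..<x}. \<Sum>a'\<in>{0..<x}. s2 (\<beta> a) (\<beta> a') b) = real x * real x" if "C < b" for b
  proof -
    have "(\<Sum>a\<in>{0..<x}. \<Sum>a'\<in>{0..<x}. s2 (\<beta> a) (\<beta> a') b) = (\<Sum>a\<in>{0..<x}. \<Sum>a'\<in>{0..<x}. 1)"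
      using allC that unfolding s2_def by (intro sum.cong refl) (force simp: le_less_trans)
    thus ?thesis by simp
  qed
  have pB: "p B = (real x * real x + real x + 1/3) / N^2"
  proof -
    have "(\<Sum>a\<in>{0..<x}. s2 (\<beta> a) B B) = (\<Sum>a\<in>{0..<x}. 1/2)"
      using allC CB' ti unfolding s2_def by (intro sum.cong refl) (force simp: le_less_trans)
    moreover have "(\<Sum>a\<in>{0..<x}. s2 B (\<beta> a) B) = (\<Sum>a\<in>{0..<x}. 1/2)"
      using allC CB' ti unfolding s2_def by (intro sum.cong refl) (force simp: le_less_trans)
    moreover have "s2 B B B = 1/3" using ti unfolding s2_def by simp
    ultimately show ?thesis using pf[of B] lowlow[OF CB'] by simp
  qed
  have BC: "B = C + 1"
  proof (rule ccontr)
    assume "B \<noteq> C + 1"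
    hence lt: "C + 1 < B" using CB' by simp
    have z1: "(\<Sum>a\<in>{0..<x}. s2 (\<beta> a) B (C+1)) = 0" using lt unfolding s2_def by simp
    have z2: "(\<Sum>a\<in>{0..<x}. s2 B (\<beta> a) (C+1)) = 0" using lt unfolding s2_def by simp
    have z3: "s2 B B (C+1) = 0" using lt unfolding s2_def by simp
    have pC1: "p (C+1) = (real x * real x) / N^2" using pf[of "C+1"] lowlow[of "C+1"] z1 z2 z3 by simp
    have "real x * p (C+1) - real (C+1) \<le> real x * p (\<beta> x) - real (\<beta> x)"
      using opt[of x "C+1"] lt Bx by simp
    hence "real B - real C - 1 \<le> real x * (p B - p (C+1))" unfolding B_def by (simp add: algebra_simps)
    also have "p B - p (C+1) = (real x + 1/3) / N^2" unfolding pB pC1 by (simp add: diff_divide_distrib[symmetric])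
    finally have h: "real B - real C - 1 \<le> real x * ((real x + 1/3) / N^2)" .
    have "real x * (real x + 1/3) < N^2" unfolding N_def by (simp add: power2_eq_square algebra_simps)
    hence "real x * ((real x + 1/3) / N^2) < 1" using Npos by (simp add: divide_simps)
    with h lt show False by linarith
  qed
  have pC: "p C \<le> (real x * (real x - 1/2)) / N^2"
  proof -
    have z1: "(\<Sum>a\<in>{0..<x}. s2 (\<beta> a) B C) = 0" using CB' unfolding s2_def by simp
    have z2: "(\<Sum>a\<in>{0..<x}. s2 B (\<beta> a) C) = 0" using CB' unfolding s2_def by simp
    have z3: "s2 B B C = 0" using CB' unfolding s2_def by simp
    have le: "s2 (\<beta> a) (\<beta> a') C \<le> 1 - (if a' = x - 1 then 1/2 else 0)" if "a < x" "a' < x" for a a'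
    proof (cases "a' = x - 1")
      case True
      hence "\<beta> a' = C" unfolding C_def by simp
      thus ?thesis using True unfolding s2_def by auto
    next
      case False thus ?thesis unfolding s2_def by auto
    qed
    have "(\<Sum>a\<in>{0..<x}. \<Sum>a'\<in>{0..<x}. s2 (\<beta> a) (\<beta> a') C)
        \<le> (\<Sum>a\<in>{0..<x}. \<Sum>a'\<in>{0..<x}. 1 - (if a' = x - 1 then 1/2 else 0))"
      using le by (intro sum_mono) auto
    also have "(\<Sum>a'\<in>{0..<x}. 1 - (if a' = x - 1 then 1/2 else (0::real))) = real x - 1/2"
      using x10 by (simp add: sum_subtractf sum.delta)
    finally have "(\<Sum>a\<in>{0..<x}. \<Sum>a'\<in>{0..<x}. s2 (\<beta> a) (\<beta> a') C) \<le> real x * (real x - 1/2)" by simp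
    thus ?thesis using pf[of C] z1 z2 z3 Npos by (simp add: divide_right_mono)
  qed
  have "real (x-1) * p B - real B \<le> real (x-1) * p (\<beta> (x-1)) - real (\<beta> (x-1))"
    using opt[of "x-1" B] Bx by simp
  hence "real (x-1) * (p B - p C) \<le> 1" using BC unfolding C_def by (simp add: algebra_simps)
  moreover have "p B - p C \<ge> (3/2 * real x + 1/3) / N^2"
  proof -
    have "(3/2 * real x + 1/3) / N^2 = (real x * real x + real x + 1/3) / N^2 - (real x * (real x - 1/2)) / N^2"
      by (simp add: diff_divide_distrib[symmetric] algebra_simps)
    thus ?thesis using pB pC by linarith
  qed
  ultimately have "real (x-1) * ((3/2 * real x + 1/3) / N^2) \<le> 1"
    using x10 by (smt (verit) mult_left_mono of_nat_0_le_iff)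
  hence "(real x - 1) * (3/2 * real x + 1/3) \<le> N^2" using Npos x10 by (simp add: divide_simps of_nat_diff)
  moreover have "(real x - 1) * (3/2 * real x + 1/3) > N^2"
  proof -
    obtain y where y: "real x = 10 + y" "y \<ge> 0" using x10 by (intro that[of "real x - 10"]) auto
    have "6 * N^2 < (real x - 1) * (9 * real x + 2)" unfolding N_def y(1) using y(2)
      by (simp add: power2_eq_square algebra_simps add_pos_nonneg add_nonneg_pos mult_nonneg_nonneg)
    moreover have "(real x - 1) * (3/2 * real x + 1/3) = (real x - 1) * (9 * real x + 2) / 6"
      by (simp add: field_simps)
    ultimately show ?thesis by linarith
  qed
  ultimately show False by simp
qed

lemma s1_lt: "c < b \<Longrightarrow> s1 c b = 1" unfolding s1_def by simp
lemma s1_gt: "b < c \<Longrightarrow> s1 c b = 0" unfolding s1_def by simp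
lemma s1_eq: "s1 c c = (if ties then 1/2 else 0)" unfolding s1_def by simp

lemma top2:
  assumes n2e: "n = 2" and kx: "k < x" and r2: "x - k \<le> 2" and tr: "ties \<or> x - k = 1"
    and top: "\<forall>v. k < v \<and> v \<le> x \<longrightarrow> \<beta> v = B" and lowk: "\<beta> k < B"
  shows "\<exists>t::nat. t \<ge> 1 \<and>
     real x + 1 \<le> (real k + 1) * (real (x-k) * (if ties then 1/2 else 0) + (1 - (if ties then 1/2 else 0)) * real t) \<and>
     real k * (real (x-k) * (if ties then 1/2 else 0) + (1 - (if ties then 1/2 else 0)) * real t) \<le> real x + 1"
proof -
  define s0 :: real where "s0 = (if ties then 1/2 else 0)"
  define E where "E = \<beta> k"
  define N where "N = real x + 1"
  define r where "r = x - k"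
  have Npos: "N > 0" unfolding N_def by simp
  have allk: "\<forall>a\<le>k. \<beta> a \<le> E" unfolding E_def using beta_mono kx by auto
  have Bx: "B \<le> x" using top valid_beta kx by (metis le_refl)
  have rs0: "real r * s0 \<le> 1" unfolding r_def s0_def using r2 tr by auto
  have split: "(\<Sum>a\<in>{0..x}. s1 (\<beta> a) b) = (\<Sum>a\<in>{0..k}. s1 (\<beta> a) b) + real r * s1 B b" for b
  proof -
    have u: "{0..x} = {0..k} \<union> {Suc k..x}" using kx by auto
    have "(\<Sum>a\<in>{0..x}. s1 (\<beta> a) b) = (\<Sum>a\<in>{0..k}. s1 (\<beta> a) b) + (\<Sum>a\<in>{Suc k..x}. s1 (\<beta> a) b)"
      unfolding u by (rule sum.union_disjoint) auto
    also have "(\<Sum>a\<in>{Suc k..x}. s1 (\<beta> a) b) = (\<Sum>a\<in>{Suc k..x}. s1 B b)"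
      using top by (intro sum.cong) auto
    also have "\<dots> = real r * s1 B b" unfolding r_def by simp
    finally show ?thesis .
  qed
  have pform: "p b = ((\<Sum>a\<in>{0..k}. s1 (\<beta> a) b) + real r * s1 B b) / N" for b
    using p2[OF n2e, of b] split N_def by simp
  have low1: "(\<Sum>a\<in>{0..k}. s1 (\<beta> a) b) = real k + 1" if "E < b" for b
  proof -
    have "(\<Sum>a\<in>{0..k}. s1 (\<beta> a) b) = (\<Sum>a\<in>{0..k}. 1)"
      using allk that by (intro sum.cong refl s1_lt) (force simp: le_less_trans)
    thus ?thesis by simp
  qed
  have pB: "p B = (real k + 1 + real r * s0) / N"
    using pform[of B] low1[of B] lowk s1_eq unfolding E_def s0_def by simp
  have BE: "B = E + 1"
  proof (rule ccontr)
    assume "B \<noteq> E + 1"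
    hence lt: "E + 1 < B" using lowk E_def by simp
    have pE1: "p (E+1) = (real k + 1) / N"
      using pform[of "E+1"] low1[of "E+1"] s1_gt[OF lt] by simp
    have "real (k+1) * p (E+1) - real (E+1) \<le> real (k+1) * p (\<beta> (k+1)) - real (\<beta> (k+1))"
      using opt[of "k+1" "E+1"] kx lt Bx by simp
    moreover have "\<beta> (k+1) = B" using top kx by simp
    ultimately have "(real k + 1) * (p B - p (E+1)) \<ge> real B - real E - 1" by (simp add: algebra_simps)
    also have "p B - p (E+1) = real r * s0 / N" using pB pE1 by (simp add: diff_divide_distrib[symmetric])
    finally have h: "real B - real E - 1 \<le> (real k + 1) * (real r * s0) / N" by simp
    have "(real k + 1) * (real r * s0) \<le> (real k + 1) * 1"
      using rs0 by (intro mult_left_mono) auto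
    also have "\<dots> < N" unfolding N_def using kx by simp
    finally have "(real k + 1) * (real r * s0) / N < 1" using Npos by simp
    with h lt show False by linarith
  qed
  define t where "t = card {a\<in>{0..k}. \<beta> a = E}"
  have t1: "t \<ge> 1"
  proof -
    have "k \<in> {a\<in>{0..k}. \<beta> a = E}" unfolding E_def by simp
    hence ne: "{a\<in>{0..k}. \<beta> a = E} \<noteq> {}" by blast
    have "finite {a\<in>{0..k}. \<beta> a = E}" by simp
    hence "card {a\<in>{0..k}. \<beta> a = E} > 0" using ne by (simp add: card_gt_0_iff)
    thus ?thesis unfolding t_def by simp
  qed
  have lowE: "(\<Sum>a\<in>{0..k}. s1 (\<beta> a) E) = real k + 1 - (1 - s0) * real t"
  proof -
    have "(\<Sum>a\<in>{0..k}. s1 (\<beta> a) E) = (\<Sum>a\<in>{0..k}. 1 - (1 - s0) * (if \<beta> a = E then 1 else 0))"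
    proof (intro sum.cong refl)
      fix a assume "a \<in> {0..k}"
      hence "\<beta> a \<le> E" using allk by simp
      thus "s1 (\<beta> a) E = 1 - (1 - s0) * (if \<beta> a = E then 1 else 0)"
        unfolding s1_def s0_def by auto
    qed
    also have "\<dots> = real k + 1 - (1 - s0) * (\<Sum>a\<in>{0..k}. (if \<beta> a = E then 1 else 0))"
      by (simp add: sum_subtractf sum_distrib_left)
    also have "(\<Sum>a\<in>{0..k}. (if \<beta> a = E then 1 else 0::real)) = real t"
      unfolding t_def using sum.inter_filter[of "{0..k}" "\<lambda>_. 1::real" "\<lambda>a. \<beta> a = E"] by simp
    finally show ?thesis .
  qed
  have pE: "p E = (real k + 1 - (1 - s0) * real t) / N"
    using pform[of E] lowE s1_gt[of E B] lowk E_def by simp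
  define D where "D = real r * s0 + (1 - s0) * real t"
  have PD: "p B - p E = D / N" unfolding D_def pB pE by (simp add: diff_divide_distrib[symmetric])
  have o1: "real (k+1) * p E - real E \<le> real (k+1) * p (\<beta> (k+1)) - real (\<beta> (k+1))"
    using opt[of "k+1" E] kx BE Bx by simp
  have bk1: "\<beta> (k+1) = B" using top kx by simp
  have "(real k + 1) * (D / N) \<ge> 1" using o1 bk1 BE PD by (simp add: algebra_simps)
  hence i1: "N \<le> (real k + 1) * D" using Npos by (simp add: field_simps)
  have o2: "real k * p B - real B \<le> real k * p (\<beta> k) - real (\<beta> k)"
    using opt[of k B] kx Bx by simp
  have "real k * (D / N) \<le> 1" using o2 BE PD E_def by (simp add: algebra_simps)
  hence i2: "real k * D \<le> N" using Npos by (simp add: field_simps)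
  show ?thesis using t1 i1 i2 unfolding D_def N_def s0_def r_def by (intro exI[of _ t]) simp
qed

lemma contra: assumes x10: "x \<ge> 10" shows False
proof -
  define B where "B = \<beta> x"
  define C where "C = \<beta> (x-1)"
  define N where "N = real x + 1"
  define c :: real where "c = (if ties then 1/2 else 1)"
  have Npos: "N > 0" unfolding N_def by simp
  have allB: "\<forall>v\<le>x. \<beta> v \<le> B" unfolding B_def using beta_mono by auto
  have Bx: "B \<le> x" using valid_beta B_def by simp
  have CB: "C \<le> B" using allB C_def by simp
  have sub1: "{1} \<subseteq> Opp" using O_eq n2 by auto
  have UB1: "p B \<le> 1 - c * (1 - ((real x + 1 - real (card {x})) / (real x + 1))^card {1::nat})"
    using UBp[OF sub1, of "{x}" B] B_def unfolding c_def by simp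
  have "((real x + 1 - real (card {x})) / (real x + 1))^card {1::nat} < 1" by simp
  moreover have "c > 0" unfolding c_def by simp
  ultimately have "c * (1 - ((real x + 1 - real (card {x})) / (real x + 1))^card {1::nat}) > 0"
    by (intro mult_pos_pos) auto
  hence pB1: "p B < 1" using UB1 by linarith
  have BltX: "B < x"
  proof (rule ccontr)
    assume "\<not> B < x"
    hence Bx': "B = x" using Bx by simp
    have "real x * p 0 - real 0 \<le> real x * p (\<beta> x) - real (\<beta> x)" using opt[of x 0] by simp
    moreover have "0 \<le> real x * p 0" using p_nonneg[of 0] by simp
    ultimately have "0 \<le> real x * p B - real x" using Bx' B_def by simp
    hence "real x * 1 \<le> real x * p B" by simp
    hence "1 \<le> p B" using x10 by (simp add: mult_le_cancel_left)
    with pB1 show False by simp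
  qed
  have top: "real x * (1 - p B) \<le> 1"
  proof -
    have "real x * p (B+1) - real (B+1) \<le> real x * p (\<beta> x) - real (\<beta> x)"
      using opt[of x "B+1"] BltX by simp
    moreover have "p (B+1) = 1" using allB by (intro p_top) (auto simp: le_imp_less_Suc)
    ultimately show ?thesis unfolding B_def by (simp add: algebra_simps)
  qed
  have x0: "real x \<ge> 0" by simp
  have xr: "real x \<ge> 10" using x10 by simp
  consider "n \<ge> 4" | "n = 3" | "n = 2" using n2 by linarith
  thus False
  proof cases
    case 1
    have sub: "{1,2,3} \<subseteq> Opp" using O_eq 1 by auto
    have "p B \<le> 1 - c * (1 - ((real x + 1 - real (card {x})) / (real x + 1))^card {1::nat,2,3})"
      using UBp[OF sub, of "{x}" B] B_def unfolding c_def by simp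
    moreover have "card {1::nat,2,3} = 3" "real x + 1 - real (card {x}) = real x" by simp_all
    ultimately have "p B \<le> 1 - c * (1 - (real x / N)^3)" unfolding N_def by (simp only:)
    from helpG[OF x0 top this Npos] have h: "real x * c * (N^3 - real x^3) \<le> N^3" .
    have "real x * (1/2) * (N^3 - real x^3) \<le> real x * c * (N^3 - real x^3)"
      unfolding c_def N_def by (intro mult_right_mono mult_left_mono) (auto intro: power_mono)
    with h poly4[OF xr] show False unfolding N_def by simp
  next
    case 2
    have sub: "{1,2} \<subseteq> Opp" using O_eq 2 by auto
    show False
    proof (cases ties)
      case False
      have "p B \<le> 1 - c * (1 - ((real x + 1 - real (card {x})) / (real x + 1))^card {1::nat,2})"
        using UBp[OF sub, of "{x}" B] B_def unfolding c_def by simp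
      moreover have "card {1::nat,2} = 2" "real x + 1 - real (card {x}) = real x" "c = 1"
        using False by (simp_all add: c_def)
      ultimately have "p B \<le> 1 - 1 * (1 - (real x / N)^2)" unfolding N_def by (simp only:)
      from helpG[OF x0 top this Npos] have h: "real x * 1 * (N^2 - real x^2) \<le> N^2" .
      with poly3[OF xr] show False unfolding N_def by simp
    next
      case True
      show False
      proof (cases "C = B")
        case True
        have S: "{x-1, x} \<subseteq> {0..x}" by auto
        have SB: "\<forall>v\<in>{x-1,x}. \<beta> v = B" using True C_def B_def by auto
        have cS: "card {x-1, x} = 2" using x10 by simp
        have "p B \<le> 1 - c * (1 - ((real x + 1 - real (card {x-1,x})) / (real x + 1))^card {1::nat,2})"
          using UBp[OF sub S SB] unfolding c_def by simp
        moreover have "card {1::nat,2} = 2" "real x + 1 - real (card {x-1,x}) = real x + 1 - 2" "c = 1/2"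
          using \<open>ties\<close> cS by (simp_all add: c_def)
        ultimately have "p B \<le> 1 - (1/2) * (1 - ((N - 2) / N)^2)" unfolding N_def by (simp only:)
        from helpG[OF x0 top this Npos] have h: "real x * (1/2) * (N^2 - (N-2)^2) \<le> N^2" .
        with poly3t[OF xr] show False unfolding N_def by simp
      next
        case False
        hence "\<beta> (x-1) < \<beta> x" using CB B_def C_def by simp
        thus False using top3[OF 2 \<open>ties\<close> x10] by simp
      qed
    qed
  next
    case 3
    show False
    proof (cases "C = B")
      case CeqB: True
      show False
      proof (cases ties)
        case False
        have S: "{x-1, x} \<subseteq> {0..x}" by auto
        have SB: "\<forall>v\<in>{x-1,x}. \<beta> v = B" using CeqB C_def B_def by auto
        have cS: "card {x-1, x} = 2" using x10 by simp
        have "p B \<le> 1 - c * (1 - ((real x + 1 - real (card {x-1,x})) / (real x + 1))^card {1::nat})"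
          using UBp[OF sub1 S SB] unfolding c_def by simp
        moreover have "card {1::nat} = 1" "real x + 1 - real (card {x-1,x}) = real x + 1 - 2" "c = 1"
          using False cS by (simp_all add: c_def)
        ultimately have "p B \<le> 1 - 1 * (1 - ((N - 2) / N)^1)" unfolding N_def by (simp only:)
        from helpG[OF x0 top this Npos] have h: "real x * 1 * (N^1 - (N-2)^1) \<le> N^1" .
        with xr show False unfolding N_def by simp
      next
        case True
        show False
        proof (cases "\<beta> (x-2) = B")
          case True
          have S: "{x-2, x-1, x} \<subseteq> {0..x}" by auto
          have SB: "\<forall>v\<in>{x-2,x-1,x}. \<beta> v = B" using True CeqB C_def B_def by auto
          have cS: "card {x-2, x-1, x} = 3" using x10 by (simp add: card_insert_if, arith)
          have "p B \<le> 1 - c * (1 - ((real x + 1 - real (card {x-2,x-1,x})) / (real x + 1))^card {1::nat})"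
            using UBp[OF sub1 S SB] unfolding c_def by simp
          moreover have "card {1::nat} = 1" "real x + 1 - real (card {x-2,x-1,x}) = real x + 1 - 3" "c = 1/2"
            using \<open>ties\<close> cS by (simp_all add: c_def)
          ultimately have "p B \<le> 1 - (1/2) * (1 - ((N - 3) / N)^1)" unfolding N_def by (simp only:)
          from helpG[OF x0 top this Npos] have h: "real x * (1/2) * (N^1 - (N-3)^1) \<le> N^1" .
          with xr show False unfolding N_def by simp
        next
          case False
          have lk: "\<beta> (x-2) < B" using False allB[rule_format, of "x-2"] by simp
          have tp: "\<forall>v. x-2 < v \<and> v \<le> x \<longrightarrow> \<beta> v = B"
          proof (intro allI impI)
            fix v assume "x - 2 < v \<and> v \<le> x"
            hence "v = x - 1 \<or> v = x" by auto
            thus "\<beta> v = B" using CeqB C_def B_def by auto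
          qed
          have kx: "x - 2 < x" and r2: "x - (x-2) \<le> 2" and tr: "ties \<or> x - (x-2) = 1"
            using x10 \<open>ties\<close> by auto
          from top2[OF 3 kx r2 tr tp lk] obtain t :: nat where t: "t \<ge> 1"
            "real (x-2) * (real (x-(x-2)) * (if ties then 1/2 else 0) + (1 - (if ties then 1/2 else 0)) * real t) \<le> real x + 1"
            by blast
          have x2: "real (x - (x-2)) = 2" using x10 by (simp add: of_nat_diff)
          have h: "real (x-2) * (1 + (1/2) * real t) \<le> real x + 1" using t(2) x2 \<open>ties\<close> by simp
          have "real (x-2) * (3/2) \<le> real (x-2) * (1 + (1/2) * real t)"
            using t(1) by (intro mult_left_mono) auto
          moreover have "real (x-2) = real x - 2" using x10 by (simp add: of_nat_diff)
          ultimately show False using h xr by linarith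
        qed
      qed
    next
      case False
      hence lk: "\<beta> (x-1) < B" using CB C_def by simp
      have tp: "\<forall>v. x-1 < v \<and> v \<le> x \<longrightarrow> \<beta> v = B"
      proof (intro allI impI)
        fix v assume "x-1 < v \<and> v \<le> x"
        hence "v = x" by auto
        thus "\<beta> v = B" using B_def by simp
      qed
      have kx: "x - 1 < x" and r2: "x - (x-1) \<le> 2" and tr: "ties \<or> x - (x-1) = 1"
        using x10 by auto
      from top2[OF 3 kx r2 tr tp lk] obtain t :: nat where t: "t \<ge> 1"
        "real x + 1 \<le> (real (x-1) + 1) * (real (x-(x-1)) * (if ties then 1/2 else 0) + (1 - (if ties then 1/2 else 0)) * real t)"
        "real (x-1) * (real (x-(x-1)) * (if ties then 1/2 else 0) + (1 - (if ties then 1/2 else 0)) * real t) \<le> real x + 1"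
        by blast
      have x1: "real (x-1) = real x - 1" "real (x - (x-1)) = 1" using x10 by (auto simp: of_nat_diff)
      have t2: "t \<ge> 2"
      proof (rule ccontr)
        assume "\<not> t \<ge> 2" hence "t = 1" using t(1) by simp
        thus False using t(2) x1 by (cases ties) auto
      qed
      hence t2r: "real t \<ge> 2" by simp
      show False
      proof (cases ties)
        case True
        hence h: "(real x - 1) * (1/2 + (1/2) * real t) \<le> real x + 1" using t(3) x1 by simp
        have "(real x - 1) * (3/2) \<le> (real x - 1) * (1/2 + (1/2) * real t)"
          using t2r xr by (intro mult_left_mono) auto
        with h xr show False by simp
      next
        case False
        hence h: "(real x - 1) * real t \<le> real x + 1" using t(3) x1 by simp
        have "(real x - 1) * 2 \<le> (real x - 1) * real t"
          using t2r xr by (intro mult_left_mono) auto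
        with h xr show False by simp
      qed
    qed
  qed
qed

end

theorem proposition4:
  fixes n x :: nat and ties :: bool
  assumes "n \<ge> 2" and "x \<ge> 10"
  shows "\<not> (\<exists>beta. symmetric_equilibrium ties n x beta)"
  using contra assms by blast

end
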